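(* Let $d_3(n)=\sum_{abc=n}1$ be the three-divisor function (so $\sum_{n\ge1}d_3(n)n^{-s}=\zeta(s)^3$), and for real $x$ and positive integer $H$ let $M_3(x,H)=H\,\mathrm{Res}_{s=1}\big(\zeta(s)^3x^{s-1}\big)$. For positive integers $N,H$ define $$J_3(N,H)=\sum_{N<x\le 2N}\Big|\sum_{x<n\le x+H}d_3(n)-M_3(x,H)\Big|^2,\qquad \widetilde{J}_3(N,H)=\sum_{N<x\le 2N}\Big|\sum_{0\le |n-x|\le H}\Big(1-\frac{|n-x|}{H}\Big)d_3(n)-M_3(x,H)\Big|^2,$$ where $x$ and $n$ run over positive integers. Fix a constant $c>0$. Assume the following (Conjecture CL): for every $\varepsilon>0$ there is $C_\varepsilon>0$ such that $\widetilde{J}_3(N,H)\le C_\varepsilon N^{\varepsilon}NH$ for all positive integers $N,H$ with $H\le cN^{1/3}$. Then for every $\varepsilon>0$ there is $C'_\varepsilon>0$ such that $J_3(N,H)\le C'_\varepsilon N^{\varepsilon}NH^{6/5}$ for all positive integers $N,H$ with $H\le cN^{1/3}$.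
   Context: The notation $A\ll B$ means $|A|\le C B$ for some constant $C$; the estimates are understood as $N\to\infty$. *)

theory Defs
  imports "HOL-Complex_Analysis.Complex_Analysis"
begin

definition d3 :: "nat \<Rightarrow> nat" where
  "d3 n = card ({(a, b, c). a * b * c = n} :: (nat \<times> nat \<times> nat) set)"

definition eta :: "complex \<Rightarrow> complex" where
  "eta s = (\<Sum>n. (-1) ^ n / (of_nat (Suc n)) powr s)"

text \<open>Riemann zeta function on the half plane Re s > 0 (analytic continuation
  via zeta(s) = eta(s) / (1 - 2^(1-s))); for Re s > 1 it equals the sum of n^(-s).\<close>
definition zeta :: "complex \<Rightarrow> complex" where
  "zeta s = eta s / (1 - 2 powr (1 - s))"

definition M3 :: "real \<Rightarrow> nat \<Rightarrow> complex" where
  "M3 x H = of_nat H * residue (\<lambda>s. zeta s ^ 3 * (of_real x) powr (s - 1)) 1"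

definition J3 :: "nat \<Rightarrow> nat \<Rightarrow> real" where
  "J3 N H = (\<Sum>x\<in>{N<..2*N}.
     (cmod ((\<Sum>n\<in>{x<..x+H}. of_nat (d3 n)) - M3 (real x) H))\<^sup>2)"

definition J3tilde :: "nat \<Rightarrow> nat \<Rightarrow> real" where
  "J3tilde N H = (\<Sum>x\<in>{N<..2*N}.
     (cmod ((\<Sum>n\<in>{n::nat. 0 < n \<and> \<bar>int n - int x\<bar> \<le> int H}.
        of_real (1 - \<bar>real n - real x\<bar> / real H) * of_nat (d3 n)) - M3 (real x) H))\<^sup>2)"

end

theory Submission
  imports Defs
begin



lemma nat_powr_exp: "(of_nat (Suc n) :: complex) powr s = exp (s * of_real (ln (real (Suc n))))"
  unfolding powr_def by (simp del: of_nat_Suc add: Ln_of_nat[of "Suc n", simplified])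

definition bt :: "nat \<Rightarrow> complex \<Rightarrow> complex" where
  "bt n s = (-1) ^ n / (of_nat (Suc n)) powr s"

definition pt :: "nat \<Rightarrow> complex \<Rightarrow> complex" where
  "pt k s = bt (2*k) s + bt (2*k+1) s"

lemma nat_powr_exp': "0 < n \<Longrightarrow> (of_nat n :: complex) powr s = exp (s * of_real (ln (real n)))"
  unfolding powr_def by (simp add: Ln_of_nat)

lemma pt_eq: "pt k s = exp (- s * of_real (ln (real (2*k+1)))) - exp (- s * of_real (ln (real (2*k+2))))"
proof -
  have a: "(of_nat (Suc (2*k)) :: complex) powr s = exp (s * of_real (ln (real (2*k+1))))"
    using nat_powr_exp'[of "Suc (2*k)" s] by simp
  have b: "(of_nat (Suc (2*k+1)) :: complex) powr s = exp (s * of_real (ln (real (2*k+2))))"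
    using nat_powr_exp'[of "Suc (2*k+1)" s] by (simp add: add_ac)
  show ?thesis unfolding pt_def bt_def
    by (simp only: a b) (simp add: exp_minus divide_inverse)
qed

lemma ball1_props:
  assumes "s \<in> ball (1::complex) (1/2)"
  shows "Re s \<ge> 1/2" "cmod s \<le> 3/2"
proof -
  have d: "cmod (s - 1) < 1/2" using assms by (simp add: dist_norm norm_minus_commute)
  have "\<bar>Re (s - 1)\<bar> \<le> cmod (s - 1)" by (rule abs_Re_le_cmod)
  then show "Re s \<ge> 1/2" using d by simp
  have "cmod s \<le> cmod (s - 1) + cmod (1::complex)" by (metis norm_triangle_sub add.commute)
  then show "cmod s \<le> 3/2" using d by simp
qed

lemma ln_diff_le: "0 < (x::real) \<Longrightarrow> x \<le> y \<Longrightarrow> ln y - ln x \<le> (y - x) / x"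
proof -
  assume x: "0 < x" and xy: "x \<le> y"
  have y: "0 < y" using x xy by linarith
  have "ln (y / x) \<le> y / x - 1" using x y by (intro ln_le_minus_one) simp
  moreover have "ln (y/x) = ln y - ln x" using x xy by (simp add: ln_div)
  moreover have "y / x - 1 = (y - x) / x" using x by (simp add: field_simps)
  ultimately show ?thesis by simp
qed

lemma pt_bound:
  assumes s: "s \<in> ball (1::complex) (1/2)" and k: "k \<ge> 1"
  shows "cmod (pt k s) \<le> 9/4 * real k powr (-3/2)"
proof -
  define L1 where "L1 = ln (real (2*k+1))"
  define L2 where "L2 = ln (real (2*k+2))"
  have sr: "Re s \<ge> 1/2" "cmod s \<le> 3/2" using ball1_props[OF s] by auto
  have dL: "0 \<le> L2 - L1" "L2 - L1 \<le> 1 / real (2*k+1)"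
    using ln_diff_le[of "real (2*k+1)" "real (2*k+2)"] unfolding L1_def L2_def by auto
  have L1: "0 \<le> L1" unfolding L1_def by simp
  have eq: "pt k s = exp (- s * of_real L1) * (1 - exp (- s * of_real (L2 - L1)))"
    unfolding pt_eq L1_def[symmetric] L2_def[symmetric]
    by (simp add: algebra_simps exp_add[symmetric])
  have n1: "cmod (exp (- s * of_real L1)) = exp (- Re s * L1)"
    by (simp add: norm_exp_eq_Re)
  also have "\<dots> \<le> exp (- (1/2) * L1)"
  proof -
    have "(1/2)*L1 \<le> Re s * L1" using sr L1 by (intro mult_right_mono) auto
    then show ?thesis by simp
  qed
  also have "\<dots> = real (2*k+1) powr (-1/2)" unfolding L1_def powr_def by simp
  finally have n1': "cmod (exp (- s * of_real L1)) \<le> real (2*k+1) powr (-1/2)" .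
  define w where "w = - s * of_real (L2 - L1)"
  have nr: "cmod (complex_of_real (L2 - L1)) = L2 - L1" using dL by (simp only: norm_of_real)
  have nw: "cmod w = cmod s * (L2 - L1)" unfolding w_def by (simp only: norm_mult norm_minus_cancel nr)
  have nw2: "cmod w \<le> 3/2 * (1 / real (2*k+1))" unfolding nw
    using sr dL by (intro mult_mono) auto
  have "3/2 * (1 / real (2*k+1)) \<le> 1/2" using k by (simp add: field_simps)
  with nw2 have nw3: "cmod w \<le> 1/2" by linarith
  have "cmod (1 - exp w) = cmod (exp w - 1)" by (simp add: norm_minus_commute)
  also have "\<dots> \<le> 3/2 * cmod w" using norm_exp_bounds(2)[OF nw3] .
  also have "\<dots> \<le> 3/2 * (3/2 * (1 / real (2*k+1)))" using nw2 by (intro mult_left_mono) auto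
  also have "\<dots> = 9/4 * (1 / real (2*k+1))" by simp
  finally have n2: "cmod (1 - exp w) \<le> 9/4 * (1 / real (2*k+1))" .
  have "cmod (pt k s) \<le> real (2*k+1) powr (-1/2) * (9/4 * (1 / real (2*k+1)))"
    unfolding eq norm_mult w_def[symmetric] using n1' n2 by (intro mult_mono) auto
  also have "\<dots> = 9/4 * real (2*k+1) powr (-3/2)"
  proof -
    define x where "x = real (2*k+1)"
    have x: "x > 0" unfolding x_def by simp
    have "x powr (-1/2) * x powr (-1) = x powr (-1/2 + -1)" by (rule powr_add[symmetric])
    also have "-1/2 + -1 = (-3/2::real)" by simp
    finally have e: "x powr (-3/2) = x powr (-1/2) * x powr (-1)" by simp
    have "x powr (-1) = 1 / x" using x by (simp add: powr_minus powr_one inverse_eq_divide)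
    then show ?thesis unfolding x_def[symmetric] e by simp
  qed
  also have "\<dots> \<le> 9/4 * real k powr (-3/2)"
    using k by (intro mult_left_mono powr_mono2') auto
  finally show ?thesis .
qed

lemma pt_deriv:
  "((\<lambda>s. pt k s) has_field_derivative
     (- of_real (ln (real (2*k+1))) * exp (- s * of_real (ln (real (2*k+1))))
      + of_real (ln (real (2*k+2))) * exp (- s * of_real (ln (real (2*k+2)))))) (at s)"
  unfolding pt_eq by (auto intro!: derivative_eq_intros simp: algebra_simps)

lemma limseq_even_odd':
  assumes "(\<lambda>n. f (2 * n)) \<longlonglongrightarrow> (l :: 'a :: metric_space)"
      and "(\<lambda>n. f (2 * n + 1)) \<longlonglongrightarrow> l"
  shows "f \<longlonglongrightarrow> l"
proof (rule metric_LIMSEQ_I)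
  fix r :: real assume r: "0 < r"
  obtain n1 where n1: "\<And>n. n \<ge> n1 \<Longrightarrow> dist (f (2*n)) l < r"
    using metric_LIMSEQ_D[OF assms(1) r] by blast
  obtain n2 where n2: "\<And>n. n \<ge> n2 \<Longrightarrow> dist (f (2*n+1)) l < r"
    using metric_LIMSEQ_D[OF assms(2) r] by blast
  show "\<exists>no. \<forall>n\<ge>no. dist (f n) l < r"
  proof (intro exI allI impI)
    fix n assume n: "2 * n1 + 2 * n2 + 1 \<le> n"
    show "dist (f n) l < r"
    proof (cases "even n")
      case True then obtain m where "n = 2*m" by blast
      then show ?thesis using n n1[of m] by auto
    next
      case False then obtain m where "n = 2*m+1" using oddE by blast
      then show ?thesis using n n2[of m] by auto
    qed
  qed
qed

lemma bt_partial: "(\<Sum>i<2*K. bt i s) = (\<Sum>k<K. pt k s)"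
  by (induction K) (simp_all add: pt_def)

lemma bt_tendsto0:
  assumes "Re s > 0"
  shows "(\<lambda>n. bt n s) \<longlonglongrightarrow> 0"
proof -
  have nb: "cmod (bt n s) = real (Suc n) powr (- Re s)" for n
  proof -
    have "cmod ((of_nat (Suc n) :: complex) powr s) = real (Suc n) powr Re s"
      using norm_powr_real_powr[of "of_nat (Suc n)" s] by simp
    then show ?thesis unfolding bt_def
      by (simp add: norm_mult norm_inverse norm_power powr_minus divide_inverse del: of_nat_Suc)
  qed
  have "(\<lambda>n. real (Suc n) powr (- Re s)) \<longlonglongrightarrow> 0"
    using assms by (intro tendsto_neg_powr filterlim_compose[OF filterlim_real_sequentially]
        filterlim_Suc) auto
  then have "(\<lambda>n. cmod (bt n s)) \<longlonglongrightarrow> 0" unfolding nb .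
  then show ?thesis by (rule tendsto_norm_zero_cancel)
qed

lemma eta_holo: "eta holomorphic_on ball 1 (1/2)"
  and eta_sums: "\<And>x. x \<in> ball 1 (1/2) \<Longrightarrow> (\<lambda>k. pt k x) sums eta x"
proof -
  define S where "S = ball (1::complex) (1/2)"
  have sh: "summable (\<lambda>k. 9/4 * real k powr (-3/2))"
    by (intro summable_mult) (simp add: summable_real_powr_iff)
  have ev: "\<forall>\<^sub>F k in sequentially. \<forall>x\<in>S. cmod (pt k x) \<le> 9/4 * real k powr (-3/2)"
    unfolding S_def using pt_bound by (auto simp: eventually_sequentially intro!: exI[of _ 1])
  obtain g g' where gg: "\<forall>x\<in>S. ((\<lambda>k. pt k x) sums g x) \<and> ((\<lambda>k. (- of_real (ln (real (2*k+1))) * exp (- x * of_real (ln (real (2*k+1))))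
      + of_real (ln (real (2*k+2))) * exp (- x * of_real (ln (real (2*k+2)))))) sums g' x) \<and> (g has_field_derivative g' x) (at x)"
    using series_and_derivative_comparison[OF _ sh pt_deriv ev] unfolding S_def by blast
  have eq: "eta x = g x" if x: "x \<in> S" for x
  proof -
    have sx: "(\<lambda>k. pt k x) sums g x" using gg x by blast
    have rex: "Re x > 0" using ball1_props(1)[of x] x unfolding S_def by simp
    have e1: "(\<lambda>K. \<Sum>i<2*K. bt i x) \<longlonglongrightarrow> g x"
      using sx unfolding sums_def bt_partial .
    have b0: "(\<lambda>K. bt (2*K) x) \<longlonglongrightarrow> 0"
      using LIMSEQ_subseq_LIMSEQ[OF bt_tendsto0[OF rex], of "\<lambda>K. 2*K"]
      by (simp add: strict_mono_def o_def)
    have e2: "(\<lambda>K. \<Sum>i<2*K+1. bt i x) \<longlonglongrightarrow> g x"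
      using tendsto_add[OF e1 b0] by simp
    have "(\<lambda>n. \<Sum>i<n. bt i x) \<longlonglongrightarrow> g x" by (rule limseq_even_odd'[OF e1 e2])
    then have "(\<lambda>n. bt n x) sums g x" unfolding sums_def .
    then show ?thesis unfolding eta_def bt_def[symmetric] by (simp add: sums_iff)
  qed
  have "g holomorphic_on S" unfolding S_def holomorphic_on_open[OF open_ball]
    using gg unfolding S_def by blast
  then show "eta holomorphic_on ball 1 (1/2)" unfolding S_def[symmetric]
    by (rule holomorphic_transform) (simp add: eq)
  show "\<And>x. x \<in> ball 1 (1/2) \<Longrightarrow> (\<lambda>k. pt k x) sums eta x"
    using gg eq unfolding S_def by auto
qed




definition qf :: "complex \<Rightarrow> complex" where "qf s = 1 - exp ((1 - s) * of_real (ln 2))"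

lemma two_powr: "(2::complex) powr z = exp (z * of_real (ln 2))"
  using nat_powr_exp'[of 2 z] by simp

lemma zeta_eq: "zeta s = eta s / qf s"
  unfolding zeta_def qf_def two_powr ..

definition hq :: "complex \<Rightarrow> complex" where
  "hq s = (if s = 1 then deriv qf 1 else (qf s - qf 1) / (s - 1))"

lemma qf_holo: "qf holomorphic_on UNIV"
  unfolding qf_def by (intro holomorphic_intros)

lemma qf1: "qf 1 = 0" unfolding qf_def by simp

lemma qf_deriv: "deriv qf 1 = of_real (ln 2)"
proof -
  have "(qf has_field_derivative of_real (ln 2)) (at 1)"
    unfolding qf_def by (auto intro!: derivative_eq_intros)
  then show ?thesis by (rule DERIV_imp_deriv)
qed

lemma hq_holo: "hq holomorphic_on UNIV"
  unfolding hq_def using pole_lemma[OF qf_holo, of 1] by simp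

lemma hq1: "hq 1 \<noteq> 0" unfolding hq_def qf_deriv by simp

lemma zeta_eq2: "s \<noteq> 1 \<Longrightarrow> zeta s = eta s / ((s - 1) * hq s)"
  unfolding zeta_eq hq_def qf1 by simp

lemma higher_deriv_expL:
  "(deriv ^^ j) (\<lambda>s. exp ((s - 1) * L)) = (\<lambda>s. L ^ j * exp ((s - 1) * L))"
proof (induction j)
  case 0 then show ?case by simp
next
  case (Suc j)
  have dd: "deriv (\<lambda>s. L ^ j * exp ((s - 1) * L)) s = L ^ Suc j * exp ((s - 1) * L)" for s
    by (rule DERIV_imp_deriv) (auto intro!: derivative_eq_intros)
  have "(deriv ^^ Suc j) (\<lambda>s. exp ((s - 1) * L)) = deriv ((deriv ^^ j) (\<lambda>s. exp ((s - 1) * L)))"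
    by simp
  also have "\<dots> = deriv (\<lambda>s. L ^ j * exp ((s - 1) * L))" by (simp only: Suc.IH)
  also have "\<dots> = (\<lambda>s. L ^ Suc j * exp ((s - 1) * L))" using dd by (simp add: fun_eq_iff)
  finally show ?case .
qed

lemma rr_poly: "\<exists>a0 a1 a2. \<forall>x::real. x > 0 \<longrightarrow>
   residue (\<lambda>s. zeta s ^ 3 * of_real x powr (s - 1)) 1 = a0 + a1 * of_real (ln x) + a2 * of_real (ln x) ^ 2"
proof -
  define U where "U = ball (1::complex) (1/2) \<inter> {s. hq s \<noteq> 0}"
  have hqc: "continuous_on UNIV hq" using hq_holo holomorphic_on_imp_continuous_on by blast
  have oU: "open U" unfolding U_def
    by (intro open_Int open_ball open_Collect_neq hqc) auto
  have U1: "1 \<in> U" unfolding U_def using hq1 by simp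
  define G where "G s = (eta s / hq s) ^ 3" for s
  have Gh: "G holomorphic_on U" unfolding G_def U_def
    by (intro holomorphic_intros holomorphic_on_subset[OF eta_holo]
        holomorphic_on_subset[OF hq_holo]) auto
  have main: "residue (\<lambda>s. zeta s ^ 3 * of_real x powr (s - 1)) 1 =
      (deriv ^^ 2) G 1 / 2 + deriv G 1 * of_real (ln x) + G 1 / 2 * of_real (ln x) ^ 2"
    if x: "x > 0" for x
  proof -
    define L where "L = (of_real (ln x) :: complex)"
    define E where "E s = exp ((s - 1) * L)" for s
    define F where "F s = G s * E s" for s
    have Eh: "E holomorphic_on U" unfolding E_def by (intro holomorphic_intros)
    have Fh: "F holomorphic_on U" unfolding F_def using Gh Eh by (intro holomorphic_intros)
    have eqf: "zeta s ^ 3 * of_real x powr (s - 1) = F s / (s - 1) ^ Suc 2" if "s \<noteq> 1" for s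
    proof -
      have p: "(of_real x :: complex) powr (s - 1) = E s"
        unfolding powr_def E_def L_def using x by (simp add: Ln_of_real mult.commute)
      have d: "eta s / ((s - 1) * hq s) = (eta s / hq s) / (s - 1)"
        by (simp add: divide_divide_eq_left mult.commute)
      show ?thesis unfolding zeta_eq2[OF that] p F_def G_def d power_divide
        by simp
    qed
    have "residue (\<lambda>s. zeta s ^ 3 * of_real x powr (s - 1)) 1 = residue (\<lambda>s. F s / (s - 1) ^ Suc 2) 1"
      by (intro residue_cong) (auto simp: eventually_at_filter eqf)
    also have "\<dots> = (deriv ^^ 2) F 1 / fact 2"
      by (rule residue_holomorphic_over_power[OF oU U1 Fh])
    also have "(deriv ^^ 2) F 1 = (\<Sum>i = 0..2. of_nat (2 choose i) * (deriv ^^ i) G 1 * (deriv ^^ (2 - i)) E 1)"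
      unfolding F_def by (rule higher_deriv_mult[OF Gh Eh oU U1])
    also have "\<dots> = (deriv ^^ 2) G 1 + 2 * deriv G 1 * L + G 1 * L ^ 2"
      unfolding E_def higher_deriv_expL
      by (simp add: numeral_2_eq_2 power2_eq_square)
    finally show ?thesis unfolding L_def by (simp add: field_simps)
  qed
  then show ?thesis by blast
qed




lemma ln_le_2sqrt: "1 \<le> (y::real) \<Longrightarrow> ln y \<le> 2 * sqrt y"
proof -
  assume y: "1 \<le> y"
  have s: "sqrt y > 0" using y by simp
  have "ln y = 2 * ln (sqrt y)" using y by (simp add: ln_sqrt)
  also have "\<dots> \<le> 2 * (sqrt y - 1)" using ln_le_minus_one[OF s] by simp
  finally show ?thesis by simp
qed

lemma rr_reg: "\<exists>K\<ge>0. \<forall>x y::real. 1 \<le> x \<longrightarrow> x \<le> y \<longrightarrow>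
   cmod (residue (\<lambda>s. zeta s ^ 3 * of_real y powr (s - 1)) 1 - residue (\<lambda>s. zeta s ^ 3 * of_real x powr (s - 1)) 1)
   \<le> K * sqrt y * ((y - x) / x)"
proof -
  obtain a0 a1 a2 where P: "\<And>x::real. x > 0 \<Longrightarrow>
   residue (\<lambda>s. zeta s ^ 3 * of_real x powr (s - 1)) 1 = a0 + a1 * of_real (ln x) + a2 * of_real (ln x) ^ 2"
    using rr_poly by blast
  define K where "K = cmod a1 + 4 * cmod a2"
  have "cmod (residue (\<lambda>s. zeta s ^ 3 * of_real y powr (s - 1)) 1 - residue (\<lambda>s. zeta s ^ 3 * of_real x powr (s - 1)) 1)
   \<le> K * sqrt y * ((y - x) / x)" if x: "1 \<le> x" and xy: "x \<le> y" for x y :: real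
  proof -
    define Lx where "Lx = ln x"
    define Ly where "Ly = ln y"
    have y1: "1 \<le> y" using x xy by simp
    have L: "0 \<le> Lx" "Lx \<le> Ly" unfolding Lx_def Ly_def using x xy by auto
    have dL: "Ly - Lx \<le> (y - x) / x" unfolding Lx_def Ly_def using ln_diff_le[of x y] x xy by simp
    have Ly2: "Ly \<le> 2 * sqrt y" unfolding Ly_def using ln_le_2sqrt[OF y1] .
    have sy: "1 \<le> sqrt y" using y1 by simp
    have eq: "residue (\<lambda>s. zeta s ^ 3 * of_real y powr (s - 1)) 1 - residue (\<lambda>s. zeta s ^ 3 * of_real x powr (s - 1)) 1
        = a1 * of_real (Ly - Lx) + a2 * of_real ((Ly + Lx) * (Ly - Lx))"
    proof -
      have Px: "residue (\<lambda>s. zeta s ^ 3 * of_real x powr (s - 1)) 1 = a0 + a1 * of_real Lx + a2 * of_real Lx ^ 2"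
        using P[of x] x unfolding Lx_def by simp
      have Py: "residue (\<lambda>s. zeta s ^ 3 * of_real y powr (s - 1)) 1 = a0 + a1 * of_real Ly + a2 * of_real Ly ^ 2"
        using P[of y] y1 unfolding Ly_def by simp
      show ?thesis unfolding Px Py by (simp add: algebra_simps power2_eq_square)
    qed
    have "cmod (a1 * of_real (Ly - Lx) + a2 * of_real ((Ly + Lx) * (Ly - Lx)))
        \<le> cmod a1 * (Ly - Lx) + cmod a2 * ((Ly + Lx) * (Ly - Lx))"
    proof -
      have n1: "cmod (complex_of_real (Ly - Lx)) = Ly - Lx" using L by (simp only: norm_of_real)
      have n2: "cmod (complex_of_real ((Ly + Lx) * (Ly - Lx))) = (Ly + Lx) * (Ly - Lx)"
        using L by (simp only: norm_of_real) simp
      show ?thesis by (rule order_trans[OF norm_triangle_ineq]) (simp only: norm_mult n1 n2 order_refl)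
    qed
    also have "\<dots> \<le> cmod a1 * (Ly - Lx) + cmod a2 * ((4 * sqrt y) * (Ly - Lx))"
      using L Ly2 by (intro add_left_mono mult_left_mono mult_right_mono) auto
    also have "\<dots> = (cmod a1 + 4 * cmod a2 * sqrt y) * (Ly - Lx)" by (simp add: algebra_simps)
    also have "\<dots> \<le> (K * sqrt y) * (Ly - Lx)"
    proof -
      have "cmod a1 * 1 \<le> cmod a1 * sqrt y" using sy by (intro mult_left_mono) auto
      then show ?thesis unfolding K_def using L by (intro mult_right_mono) (auto simp: algebra_simps)
    qed
    also have "\<dots> \<le> (K * sqrt y) * ((y - x) / x)"
      using dL sy unfolding K_def by (intro mult_left_mono) auto
    finally show ?thesis unfolding eq by simp
  qed
  moreover have "K \<ge> 0" unfolding K_def by simp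
  ultimately show ?thesis by blast
qed




definition dd :: "nat \<Rightarrow> complex" where "dd n = of_nat (d3 n)"
definition SS :: "nat \<Rightarrow> nat \<Rightarrow> complex" where "SS x l = (\<Sum>n\<in>{x<..x+l}. dd n)"
definition rr :: "nat \<Rightarrow> complex" where
  "rr x = residue (\<lambda>s. zeta s ^ 3 * of_real (real x) powr (s - 1)) 1"
definition EE :: "nat \<Rightarrow> nat \<Rightarrow> complex" where "EE x l = SS x l - of_nat l * rr x"
definition TT :: "nat \<Rightarrow> nat \<Rightarrow> complex" where
  "TT x m = (\<Sum>n\<in>{n::nat. 0 < n \<and> \<bar>int n - int x\<bar> \<le> int m}.
        of_real (1 - \<bar>real n - real x\<bar> / real m) * dd n)"
definition FF :: "nat \<Rightarrow> nat \<Rightarrow> complex" where "FF x m = TT x m - of_nat m * rr x"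

lemma J3_eq: "J3 N H = (\<Sum>x\<in>{N<..2*N}. (cmod (EE x H))\<^sup>2)"
  unfolding J3_def EE_def SS_def dd_def M3_def rr_def by simp

lemma J3t_eq: "J3tilde N H = (\<Sum>x\<in>{N<..2*N}. (cmod (FF x H))\<^sup>2)"
  unfolding J3tilde_def FF_def TT_def dd_def M3_def rr_def by simp

lemma SS_0[simp]: "SS x 0 = 0" unfolding SS_def by simp

lemma SS_Suc: "SS x (Suc l) = SS x l + dd (x + Suc l)"
proof -
  have "{x<..x + Suc l} = insert (x + Suc l) {x<..x+l}" by auto
  then show ?thesis unfolding SS_def by (simp add: add.commute)
qed

lemma SS_split: "SS x (u + v) = SS x u + SS (x + u) v"
  by (induction v) (simp_all add: SS_Suc add.assoc)

lemma SS_blocks: "SS a (q * m + r) = (\<Sum>i<q. SS (a + i * m) m) + SS (a + q * m) r"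
proof (induction q arbitrary: a)
  case 0 then show ?case by simp
next
  case (Suc q)
  have "SS a (Suc q * m + r) = SS a m + SS (a + m) (q * m + r)"
    by (simp add: SS_split[symmetric] add.assoc)
  also have "\<dots> = SS a m + (\<Sum>i<q. SS (a + m + i * m) m) + SS (a + m + q * m) r"
    by (simp add: Suc.IH)
  also have "(\<Sum>i<q. SS (a + m + i * m) m) = (\<Sum>i<q. SS (a + Suc i * m) m)"
    by (simp add: add.assoc)
  finally have e: "SS a (Suc q * m + r) = SS a m + (\<Sum>i<q. SS (a + Suc i * m) m) + SS (a + Suc q * m) r"
    by (simp add: add.assoc)
  have "(\<Sum>i<Suc q. SS (a + i * m) m) = SS a m + (\<Sum>i<q. SS (a + Suc i * m) m)"
    by (subst sum.lessThan_Suc_shift) simp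
  then show ?case using e by simp
qed

lemma SS_shift: "SS (x + j) H + SS x j = SS x H + SS (x + H) j"
  using SS_split[of x j H] SS_split[of x H j] by (simp add: add.commute)

lemma card_tri:
  assumes "y < n" "n \<le> y + 2 * m"
  shows "(of_nat (card {j\<in>{..<m}. y + j < n \<and> n \<le> y + j + m}) :: complex)
        = of_real (real m - \<bar>real n - real (y + m)\<bar>)"
proof -
  have e: "{j\<in>{..<m}. y + j < n \<and> n \<le> y + j + m} = {n - (y + m) ..< min m (n - y)}"
    using assms by auto
  have c: "card {j\<in>{..<m}. y + j < n \<and> n \<le> y + j + m} = min m (n - y) - (n - (y + m))"
    unfolding e by simp
  show ?thesis
  proof (cases "n \<le> y + m")
    case True
    then have "min m (n - y) - (n - (y + m)) = n - y" by simp
    moreover have "real m - \<bar>real n - real (y + m)\<bar> = real (n - y)" using True assms by simp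
    ultimately show ?thesis unfolding c by simp
  next
    case False
    then have "min m (n - y) - (n - (y + m)) = 2 * m + y - n" using assms by simp
    moreover have "real m - \<bar>real n - real (y + m)\<bar> = real (2 * m + y - n)" using False assms by simp
    ultimately show ?thesis unfolding c by (simp only: of_real_of_nat_eq)
  qed
qed

lemma tri:
  assumes m: "m \<ge> 1"
  shows "of_nat m * TT (y + m) m = (\<Sum>j<m. SS (y + j) m)"
proof -
  define B where "B = {y<..y + 2 * m}"
  define w where "w n = (of_real (real m - \<bar>real n - real (y + m)\<bar>) :: complex)" for n
  have fB: "finite B" unfolding B_def by simp
  have "(\<Sum>j<m. SS (y + j) m) = (\<Sum>j<m. \<Sum>n\<in>B. if y + j < n \<and> n \<le> y + j + m then dd n else 0)"
  proof (rule sum.cong[OF refl])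
    fix j assume j: "j \<in> {..<m}"
    have "{n\<in>B. y + j < n \<and> n \<le> y + j + m} = {y + j<..y + j + m}" using j unfolding B_def by auto
    then show "SS (y + j) m = (\<Sum>n\<in>B. if y + j < n \<and> n \<le> y + j + m then dd n else 0)"
      unfolding SS_def using sum.inter_filter[OF fB, of dd "\<lambda>n. y + j < n \<and> n \<le> y + j + m"] by simp
  qed
  also have "\<dots> = (\<Sum>n\<in>B. \<Sum>j<m. if y + j < n \<and> n \<le> y + j + m then dd n else 0)"
    by (rule sum.swap)
  also have "\<dots> = (\<Sum>n\<in>B. w n * dd n)"
  proof (rule sum.cong[OF refl])
    fix n assume n: "n \<in> B"
    have "(\<Sum>j<m. if y + j < n \<and> n \<le> y + j + m then dd n else 0)
        = (\<Sum>j\<in>{j\<in>{..<m}. y + j < n \<and> n \<le> y + j + m}. dd n)"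
      by (rule sum.inter_filter[symmetric]) simp
    also have "\<dots> = of_nat (card {j\<in>{..<m}. y + j < n \<and> n \<le> y + j + m}) * dd n" by simp
    also have "\<dots> = w n * dd n" unfolding w_def using card_tri[of y n m] n unfolding B_def by simp
    finally show "(\<Sum>j<m. if y + j < n \<and> n \<le> y + j + m then dd n else 0) = w n * dd n" .
  qed
  finally have R: "(\<Sum>j<m. SS (y + j) m) = (\<Sum>n\<in>B. w n * dd n)" .
  define A where "A = {n::nat. 0 < n \<and> \<bar>int n - int (y + m)\<bar> \<le> int m}"
  have fA: "finite A" unfolding A_def by (rule finite_subset[of _ "{..y + 2 * m}"]) auto
  have BA: "B \<subseteq> A" unfolding A_def B_def by auto
  have "of_nat m * TT (y + m) m = (\<Sum>n\<in>A. w n * dd n)"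
    unfolding TT_def A_def[symmetric] sum_distrib_left
  proof (rule sum.cong[OF refl])
    fix n
    have "of_nat m * (complex_of_real (1 - \<bar>real n - real (y + m)\<bar> / real m)) = w n"
      unfolding w_def using m by (simp add: field_simps)
    then show "of_nat m * (complex_of_real (1 - \<bar>real n - real (y + m)\<bar> / real m) * dd n) = w n * dd n"
      by (simp add: mult.assoc[symmetric])
  qed
  also have "\<dots> = (\<Sum>n\<in>B. w n * dd n)"
  proof (rule sum.mono_neutral_right[OF fA BA], rule ballI)
    fix n assume n: "n \<in> A - B"
    then have "n = y" unfolding A_def B_def by auto
    then show "w n * dd n = 0" unfolding w_def by simp
  qed
  finally show ?thesis using R by simp
qed




lemma decomp:
  assumes m: "m \<ge> 1"
  shows "of_nat m * SS x H = (\<Sum>i<H div m. of_nat m * TT (x + i * m + m) m)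
     + (\<Sum>j<m. SS (x + (H div m) * m + j) (H mod m) + SS x j - SS (x + H) j)"
proof -
  define q where "q = H div m"
  define r where "r = H mod m"
  have H: "H = q * m + r" unfolding q_def r_def by simp
  have "of_nat m * SS x H = (\<Sum>j<m. SS x H)" by simp
  also have "\<dots> = (\<Sum>j<m. SS (x + j) H + SS x j - SS (x + H) j)"
    by (rule sum.cong[OF refl]) (simp add: SS_shift)
  also have "\<dots> = (\<Sum>j<m. (\<Sum>i<q. SS (x + i * m + j) m) + (SS (x + q * m + j) r + SS x j - SS (x + H) j))"
  proof (rule sum.cong[OF refl])
    fix j
    have "SS (x + j) H = (\<Sum>i<q. SS (x + j + i * m) m) + SS (x + j + q * m) r"
      unfolding H by (rule SS_blocks)
    then show "SS (x + j) H + SS x j - SS (x + H) j =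
        (\<Sum>i<q. SS (x + i * m + j) m) + (SS (x + q * m + j) r + SS x j - SS (x + H) j)"
      by (simp add: add_ac)
  qed
  also have "\<dots> = (\<Sum>j<m. \<Sum>i<q. SS (x + i * m + j) m) + (\<Sum>j<m. SS (x + q * m + j) r + SS x j - SS (x + H) j)"
    by (rule sum.distrib)
  also have "(\<Sum>j<m. \<Sum>i<q. SS (x + i * m + j) m) = (\<Sum>i<q. \<Sum>j<m. SS (x + i * m + j) m)"
    by (rule sum.swap)
  also have "\<dots> = (\<Sum>i<q. of_nat m * TT (x + i * m + m) m)"
    by (rule sum.cong[OF refl]) (simp add: tri[OF m])
  finally show ?thesis unfolding q_def r_def .
qed

definition DD :: "nat \<Rightarrow> nat \<Rightarrow> nat \<Rightarrow> complex" where
  "DD x H m = (\<Sum>i<H div m. of_nat m * (rr (x + i * m + m) - rr x))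
     + (\<Sum>j<m. of_nat (H mod m) * (rr (x + (H div m) * m + j) - rr x)) / of_nat m
     - (\<Sum>j<m. of_nat j * (rr (x + H) - rr x)) / of_nat m"

lemma err_decomp:
  assumes m: "m \<ge> 1"
  shows "EE x H = (\<Sum>i<H div m. FF (x + i * m + m) m)
     + (\<Sum>j<m. EE (x + (H div m) * m + j) (H mod m) + EE x j - EE (x + H) j) / of_nat m
     + DD x H m"
proof -
  define q where "q = H div m"
  define r where "r = H mod m"
  have H: "H = q * m + r" unfolding q_def r_def by simp
  define T1 where "T1 = (\<Sum>i<q. TT (x + i * m + m) m)"
  define R1 where "R1 = (\<Sum>i<q. of_nat m * rr (x + i * m + m))"
  define S2 where "S2 = (\<Sum>j<m. SS (x + q * m + j) r + SS x j - SS (x + H) j)"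
  define R2 where "R2 = (\<Sum>j<m. of_nat r * rr (x + q * m + j))"
  define R3 where "R3 = (\<Sum>j<m. of_nat j * rr x)"
  define R4 where "R4 = (\<Sum>j<m. of_nat j * rr (x + H))"
  have mc: "(of_nat m :: complex) \<noteq> 0" using m by simp
  have dec: "of_nat m * SS x H = of_nat m * T1 + S2"
    using decomp[OF m, of x H] unfolding T1_def S2_def q_def[symmetric] r_def[symmetric]
    by (simp add: sum_distrib_left)
  have e1: "(\<Sum>i<q. FF (x + i * m + m) m) = T1 - R1"
    unfolding FF_def T1_def R1_def by (simp add: sum_subtractf)
  have e2: "(\<Sum>j<m. EE (x + q * m + j) r + EE x j - EE (x + H) j) = S2 - R2 - R3 + R4"
    unfolding EE_def S2_def R2_def R3_def R4_def by (simp add: sum_subtractf sum.distrib algebra_simps)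
  have e3: "DD x H m = R1 - of_nat q * of_nat m * rr x + R2 / of_nat m - of_nat r * rr x
       - R4 / of_nat m + R3 / of_nat m"
  proof -
    have a: "(\<Sum>i<q. of_nat m * (rr (x + i * m + m) - rr x)) = R1 - of_nat q * of_nat m * rr x"
      unfolding R1_def by (simp add: sum_subtractf algebra_simps)
    have b: "(\<Sum>j<m. of_nat r * (rr (x + q * m + j) - rr x)) = R2 - of_nat m * of_nat r * rr x"
      unfolding R2_def by (simp add: sum_subtractf algebra_simps)
    have c: "(\<Sum>j<m. of_nat j * (rr (x + H) - rr x)) = R4 - R3"
      unfolding R3_def R4_def by (simp add: sum_subtractf algebra_simps)
    show ?thesis unfolding DD_def q_def[symmetric] r_def[symmetric] a b c using mc
      by (simp add: field_simps)
  qed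
  have "EE x H = SS x H - (of_nat q * of_nat m + of_nat r) * rr x"
    unfolding EE_def H by simp
  also have "SS x H = T1 + S2 / of_nat m" using dec mc by (simp add: field_simps)
  finally have L: "EE x H = T1 + S2 / of_nat m - (of_nat q * of_nat m + of_nat r) * rr x" .
  have "(T1 - R1) + (S2 - R2 - R3 + R4) / of_nat m + (R1 - of_nat q * of_nat m * rr x + R2 / of_nat m - of_nat r * rr x
       - R4 / of_nat m + R3 / of_nat m) = T1 + S2 / of_nat m - (of_nat q * of_nat m + of_nat r) * rr x"
    by (simp add: diff_divide_distrib add_divide_distrib algebra_simps)
  then show ?thesis unfolding q_def[symmetric] r_def[symmetric] e1 e2 e3 L by simp
qed




lemma DD_bound:
  assumes m: "1 \<le> m" "m \<le> H" and dl: "0 \<le> dl"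
    and reg: "\<And>y. x \<le> y \<Longrightarrow> y \<le> x + 2 * H \<Longrightarrow> cmod (rr y - rr x) \<le> dl"
  shows "cmod (DD x H m) \<le> 3 * real H * dl"
proof -
  define q where "q = H div m"
  define r where "r = H mod m"
  have H: "H = q * m + r" unfolding q_def r_def by simp
  have qm: "q * m \<le> H" "r \<le> H" using H by auto
  have mpos: "real m > 0" using m by simp
  have b1: "cmod (\<Sum>i<q. of_nat m * (rr (x + i * m + m) - rr x)) \<le> real H * dl"
  proof -
    have "cmod (\<Sum>i<q. of_nat m * (rr (x + i * m + m) - rr x)) \<le> (\<Sum>i<q. real m * dl)"
    proof (rule order_trans[OF norm_sum sum_mono])
      fix i assume i: "i \<in> {..<q}"
      have "Suc i \<le> q" using i by simp
      then have "Suc i * m \<le> q * m" by (rule mult_le_mono1)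
      then have "i * m + m \<le> q * m" by simp
      then have "cmod (rr (x + i * m + m) - rr x) \<le> dl" using qm by (intro reg) auto
      then show "cmod (of_nat m * (rr (x + i * m + m) - rr x)) \<le> real m * dl"
        by (simp add: norm_mult mult_left_mono)
    qed
    also have "\<dots> = real (q * m) * dl" by simp
    also have "\<dots> \<le> real H * dl" using qm dl by (intro mult_right_mono) (simp only: of_nat_le_iff, simp)
    finally show ?thesis .
  qed
  have b2: "cmod ((\<Sum>j<m. of_nat r * (rr (x + q * m + j) - rr x)) / of_nat m) \<le> real H * dl"
  proof -
    have "cmod (\<Sum>j<m. of_nat r * (rr (x + q * m + j) - rr x)) \<le> (\<Sum>j<m. real r * dl)"
    proof (rule order_trans[OF norm_sum sum_mono])
      fix j assume j: "j \<in> {..<m}"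
      have "cmod (rr (x + q * m + j) - rr x) \<le> dl" using qm j m by (intro reg) auto
      then show "cmod (of_nat r * (rr (x + q * m + j) - rr x)) \<le> real r * dl"
        by (simp add: norm_mult mult_left_mono)
    qed
    also have "\<dots> = real m * (real r * dl)" by simp
    finally have "cmod (\<Sum>j<m. of_nat r * (rr (x + q * m + j) - rr x)) / real m \<le> real r * dl"
      using mpos by (simp add: field_simps)
    also have "\<dots> \<le> real H * dl" using qm dl by (intro mult_right_mono) auto
    finally show ?thesis by (simp add: norm_divide)
  qed
  have b3: "cmod ((\<Sum>j<m. of_nat j * (rr (x + H) - rr x)) / of_nat m) \<le> real H * dl"
  proof -
    have "cmod (\<Sum>j<m. of_nat j * (rr (x + H) - rr x)) \<le> (\<Sum>j<m. real m * dl)"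
    proof (rule order_trans[OF norm_sum sum_mono])
      fix j assume j: "j \<in> {..<m}"
      have "cmod (rr (x + H) - rr x) \<le> dl" by (intro reg) auto
      moreover have "real j \<le> real m" using j by simp
      ultimately show "cmod (of_nat j * (rr (x + H) - rr x)) \<le> real m * dl"
        by (simp add: norm_mult mult_mono)
    qed
    also have "\<dots> = real m * (real m * dl)" by simp
    finally have "cmod (\<Sum>j<m. of_nat j * (rr (x + H) - rr x)) / real m \<le> real m * dl"
      using mpos by (simp add: field_simps)
    also have "\<dots> \<le> real H * dl" using m dl by (intro mult_right_mono) auto
    finally show ?thesis by (simp add: norm_divide)
  qed
  have "cmod (DD x H m) \<le> cmod (\<Sum>i<q. of_nat m * (rr (x + i * m + m) - rr x))
     + cmod ((\<Sum>j<m. of_nat r * (rr (x + q * m + j) - rr x)) / of_nat m)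
     + cmod ((\<Sum>j<m. of_nat j * (rr (x + H) - rr x)) / of_nat m)"
    unfolding DD_def q_def[symmetric] r_def[symmetric]
    by (rule order_trans[OF norm_triangle_ineq4]) (intro add_right_mono norm_triangle_ineq)
  then show ?thesis using b1 b2 b3 by simp
qed

lemma rr_reg_nat: "\<exists>K\<ge>0. \<forall>N x y H::nat. 1 \<le> N \<longrightarrow> N < x \<longrightarrow> x \<le> 2 * N \<longrightarrow> H \<le> N \<longrightarrow>
   x \<le> y \<longrightarrow> y \<le> x + 2 * H \<longrightarrow> cmod (rr y - rr x) \<le> K * real H / sqrt (real N)"
proof -
  obtain K where K: "K \<ge> 0" and reg: "\<And>x y::real. 1 \<le> x \<Longrightarrow> x \<le> y \<Longrightarrow>
   cmod (residue (\<lambda>s. zeta s ^ 3 * of_real y powr (s - 1)) 1 - residue (\<lambda>s. zeta s ^ 3 * of_real x powr (s - 1)) 1)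
   \<le> K * sqrt y * ((y - x) / x)"
    using rr_reg by blast
  have "cmod (rr y - rr x) \<le> (4 * K) * real H / sqrt (real N)"
    if a: "1 \<le> N" "N < x" "x \<le> 2 * N" "H \<le> N" "x \<le> y" "y \<le> x + 2 * H" for N x y H :: nat
  proof -
    have rN: "real N \<ge> 1" "real x > real N" "real y \<le> 4 * real N" "real y - real x \<le> 2 * real H"
      using a by auto
    have s1: "sqrt (real y) \<le> 2 * sqrt (real N)"
    proof -
      have "sqrt (real y) \<le> sqrt (4 * real N)" using rN by simp
      also have "sqrt (4 * real N) = 2 * sqrt (real N)" by (simp add: real_sqrt_mult)
      finally show ?thesis .
    qed
    have s2: "(real y - real x) / real x \<le> 2 * real H / real N"
      using rN by (intro frac_le) auto
    have "cmod (rr y - rr x) \<le> K * sqrt (real y) * ((real y - real x) / real x)"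
      unfolding rr_def using reg[of "real x" "real y"] a by simp
    also have "\<dots> \<le> K * (2 * sqrt (real N)) * (2 * real H / real N)"
      using K s1 s2 a by (intro mult_mono) auto
    also have "\<dots> = (4 * K) * real H * (sqrt (real N) / real N)" by simp
    also have "sqrt (real N) / real N = 1 / sqrt (real N)"
    proof -
      have sp: "sqrt (real N) > 0" using rN by simp
      have "real N = sqrt (real N) * sqrt (real N)" using rN by (simp add: real_sqrt_mult_self)
      then show ?thesis using sp by (metis divide_divide_eq_right div_self less_irrefl div_by_1 nonzero_mult_div_cancel_left sp)
    qed
    finally show ?thesis by simp
  qed
  moreover have "4 * K \<ge> 0" using K by simp
  ultimately show ?thesis by blast
qed




lemma cs_real:
  fixes a :: "'i \<Rightarrow> real"
  assumes "finite I"
  shows "(\<Sum>i\<in>I. a i)\<^sup>2 \<le> real (card I) * (\<Sum>i\<in>I. (a i)\<^sup>2)"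
proof -
  have "(\<Sum>i\<in>I. a i)\<^sup>2 = (\<Sum>i\<in>I. \<Sum>j\<in>I. a i * a j)"
    by (simp add: power2_eq_square sum_product)
  also have "\<dots> \<le> (\<Sum>i\<in>I. \<Sum>j\<in>I. ((a i)\<^sup>2 + (a j)\<^sup>2) / 2)"
  proof (intro sum_mono)
    fix i j
    have "0 \<le> (a i - a j)\<^sup>2" by simp
    then show "a i * a j \<le> ((a i)\<^sup>2 + (a j)\<^sup>2) / 2" by (simp add: power2_diff)
  qed
  also have "\<dots> = (\<Sum>i\<in>I. \<Sum>j\<in>I. (a i)\<^sup>2 / 2) + (\<Sum>i\<in>I. \<Sum>j\<in>I. (a j)\<^sup>2 / 2)"
    by (simp add: add_divide_distrib sum.distrib)
  also have "(\<Sum>i\<in>I. \<Sum>j\<in>I. (a j)\<^sup>2 / 2) = (\<Sum>j\<in>I. \<Sum>i\<in>I. (a j)\<^sup>2 / 2)" by (rule sum.swap)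
  also have "(\<Sum>i\<in>I. \<Sum>j\<in>I. (a i)\<^sup>2 / 2) + (\<Sum>j\<in>I. \<Sum>i\<in>I. (a j)\<^sup>2 / 2)
      = real (card I) * (\<Sum>i\<in>I. (a i)\<^sup>2)"
    by (simp add: sum_distrib_left[symmetric] sum_divide_distrib[symmetric] algebra_simps)
  finally show ?thesis .
qed

lemma cs_cmod:
  fixes f :: "'i \<Rightarrow> complex"
  assumes "finite I"
  shows "(cmod (\<Sum>i\<in>I. f i))\<^sup>2 \<le> real (card I) * (\<Sum>i\<in>I. (cmod (f i))\<^sup>2)"
proof -
  have "(cmod (\<Sum>i\<in>I. f i))\<^sup>2 \<le> (\<Sum>i\<in>I. cmod (f i))\<^sup>2"
    by (intro power_mono norm_sum) auto
  also have "\<dots> \<le> real (card I) * (\<Sum>i\<in>I. (cmod (f i))\<^sup>2)" by (rule cs_real[OF assms])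
  finally show ?thesis .
qed

lemma cs_avg:
  fixes f :: "nat \<Rightarrow> complex"
  assumes m: "m \<ge> 1"
  shows "(cmod ((\<Sum>j<m. f j) / of_nat m))\<^sup>2 \<le> (\<Sum>j<m. (cmod (f j))\<^sup>2) / real m"
proof -
  have "(cmod ((\<Sum>j<m. f j) / of_nat m))\<^sup>2 = (cmod (\<Sum>j<m. f j))\<^sup>2 / (real m)\<^sup>2"
    by (simp add: norm_divide power_divide)
  also have "\<dots> \<le> (real m * (\<Sum>j<m. (cmod (f j))\<^sup>2)) / (real m)\<^sup>2"
    using cs_cmod[of "{..<m}" f] by (intro divide_right_mono) auto
  also have "\<dots> = (\<Sum>j<m. (cmod (f j))\<^sup>2) / real m" using m by (simp add: power2_eq_square)
  finally show ?thesis .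
qed

lemma five_sq:
  fixes a b c d e :: real
  shows "(a + b + c + d + e)\<^sup>2 \<le> 5 * (a\<^sup>2 + b\<^sup>2 + c\<^sup>2 + d\<^sup>2 + e\<^sup>2)"
proof -
  have "0 \<le> (a-b)\<^sup>2+(a-c)\<^sup>2+(a-d)\<^sup>2+(a-e)\<^sup>2+(b-c)\<^sup>2+(b-d)\<^sup>2+(b-e)\<^sup>2+(c-d)\<^sup>2+(c-e)\<^sup>2+(d-e)\<^sup>2"
    by simp
  then show ?thesis by (simp add: power2_eq_square algebra_simps)
qed

lemma shift_sum:
  fixes g :: "nat \<Rightarrow> real"
  assumes g: "\<And>y. g y \<ge> 0" and s: "s \<le> 2 * N"
  shows "(\<Sum>x\<in>{N<..2*N}. g (x + s)) \<le> (\<Sum>x\<in>{N<..2*N}. g x) + (\<Sum>x\<in>{2*N<..2*(2*N)}. g x)"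
proof -
  have "(\<Sum>x\<in>{N<..2*N}. g (x + s)) = (\<Sum>y\<in>(\<lambda>x. x + s) ` {N<..2*N}. g y)"
    by (subst sum.reindex) (auto simp: inj_on_def)
  also have "\<dots> \<le> (\<Sum>y\<in>{N<..2*(2*N)}. g y)"
    using s by (intro sum_mono2) (auto simp: g)
  also have "{N<..2*(2*N)} = {N<..2*N} \<union> {2*N<..2*(2*N)}" by auto
  also have "(\<Sum>y\<in>{N<..2*N} \<union> {2*N<..2*(2*N)}. g y) = (\<Sum>x\<in>{N<..2*N}. g x) + (\<Sum>x\<in>{2*N<..2*(2*N)}. g x)"
    by (rule sum.union_disjoint) auto
  finally show ?thesis .
qed




lemma J3_nonneg: "J3 N H \<ge> 0" unfolding J3_eq by (intro sum_nonneg) auto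
lemma J3t_nonneg: "J3tilde N H \<ge> 0" unfolding J3t_eq by (intro sum_nonneg) auto
lemma J3_0: "J3 N 0 = 0" unfolding J3_eq EE_def by simp

lemma shiftJ:
  assumes "s \<le> 2 * N"
  shows "(\<Sum>x\<in>{N<..2*N}. (cmod (EE (x + s) l))\<^sup>2) \<le> J3 N l + J3 (2*N) l"
  unfolding J3_eq using shift_sum[of "\<lambda>y. (cmod (EE y l))\<^sup>2" s N] assms by simp

lemma shiftJt:
  assumes "s \<le> 2 * N"
  shows "(\<Sum>x\<in>{N<..2*N}. (cmod (FF (x + s) l))\<^sup>2) \<le> J3tilde N l + J3tilde (2*N) l"
  unfolding J3t_eq using shift_sum[of "\<lambda>y. (cmod (FF y l))\<^sup>2" s N] assms by simp

lemma core:
  assumes N: "N \<ge> 1" and m: "1 \<le> m" "m \<le> H" and HN: "H \<le> N" and K: "K \<ge> 0"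
    and reg: "\<And>x y. N < x \<Longrightarrow> x \<le> 2 * N \<Longrightarrow> x \<le> y \<Longrightarrow> y \<le> x + 2 * H
               \<Longrightarrow> cmod (rr y - rr x) \<le> K * real H / sqrt (real N)"
  shows "J3 N H \<le> 5 * (real (H div m) ^ 2 * (J3tilde N m + J3tilde (2*N) m)
            + (J3 N (H mod m) + J3 (2*N) (H mod m))
            + 2 / real m * (\<Sum>j<m. J3 N j + J3 (2*N) j)
            + 9 * K^2 * real H ^ 4)"
proof -
  define q where "q = H div m"
  define r where "r = H mod m"
  have H: "H = q * m + r" unfolding q_def r_def by simp
  have rm: "r < m" unfolding r_def using m by simp
  have qmH: "q * m \<le> H" using H by simp
  define dl where "dl = K * real H / sqrt (real N)"
  have dl0: "dl \<ge> 0" unfolding dl_def using K by simp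
  have rN: "real N \<ge> 1" using N by simp
  define X where "X = {N<..2*N}"
  have cX: "card X = N" unfolding X_def by simp
  have fX: "finite X" unfolding X_def by simp
  let ?A = "\<lambda>x. (\<Sum>i<q. FF (x + i * m + m) m)"
  let ?B1 = "\<lambda>x. (\<Sum>j<m. EE (x + q * m + j) r) / of_nat m"
  let ?B2 = "\<lambda>x. (\<Sum>j<m. EE x j) / of_nat m"
  let ?B3 = "\<lambda>x. (\<Sum>j<m. EE (x + H) j) / of_nat m"
  have pw: "(cmod (EE x H))\<^sup>2 \<le> 5 * (real q * (\<Sum>i<q. (cmod (FF (x + i * m + m) m))\<^sup>2)
     + (\<Sum>j<m. (cmod (EE (x + q * m + j) r))\<^sup>2) / real m
     + (\<Sum>j<m. (cmod (EE x j))\<^sup>2) / real m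
     + (\<Sum>j<m. (cmod (EE (x + H) j))\<^sup>2) / real m
     + 9 * K^2 * real H ^ 4 / real N)" if x: "x \<in> X" for x
  proof -
    have ed: "EE x H = ?A x + ?B1 x + ?B2 x - ?B3 x + DD x H m"
      using err_decomp[OF m(1), of x H] unfolding q_def[symmetric] r_def[symmetric]
      by (simp add: sum.distrib sum_subtractf add_divide_distrib diff_divide_distrib)
    have Db: "cmod (DD x H m) \<le> 3 * real H * dl"
      using x unfolding X_def dl_def by (intro DD_bound m dl0[unfolded dl_def] reg) auto
    have "cmod (EE x H) \<le> cmod (?A x) + cmod (?B1 x) + cmod (?B2 x) + cmod (?B3 x) + cmod (DD x H m)"
      unfolding ed by (intro order_trans[OF norm_triangle_ineq] add_right_mono
          order_trans[OF norm_triangle_ineq4] norm_triangle_ineq) auto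
    then have "(cmod (EE x H))\<^sup>2 \<le> (cmod (?A x) + cmod (?B1 x) + cmod (?B2 x) + cmod (?B3 x) + cmod (DD x H m))\<^sup>2"
      by (intro power_mono) auto
    also have "\<dots> \<le> 5 * ((cmod (?A x))\<^sup>2 + (cmod (?B1 x))\<^sup>2 + (cmod (?B2 x))\<^sup>2 + (cmod (?B3 x))\<^sup>2 + (cmod (DD x H m))\<^sup>2)"
      by (rule five_sq)
    also have "\<dots> \<le> 5 * (real q * (\<Sum>i<q. (cmod (FF (x + i * m + m) m))\<^sup>2)
     + (\<Sum>j<m. (cmod (EE (x + q * m + j) r))\<^sup>2) / real m
     + (\<Sum>j<m. (cmod (EE x j))\<^sup>2) / real m
     + (\<Sum>j<m. (cmod (EE (x + H) j))\<^sup>2) / real m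
     + 9 * K^2 * real H ^ 4 / real N)"
    proof -
      have a: "(cmod (?A x))\<^sup>2 \<le> real q * (\<Sum>i<q. (cmod (FF (x + i * m + m) m))\<^sup>2)"
        using cs_cmod[of "{..<q}"] by simp
      have b1: "(cmod (?B1 x))\<^sup>2 \<le> (\<Sum>j<m. (cmod (EE (x + q * m + j) r))\<^sup>2) / real m"
        by (rule cs_avg[OF m(1)])
      have b2: "(cmod (?B2 x))\<^sup>2 \<le> (\<Sum>j<m. (cmod (EE x j))\<^sup>2) / real m"
        by (rule cs_avg[OF m(1)])
      have b3: "(cmod (?B3 x))\<^sup>2 \<le> (\<Sum>j<m. (cmod (EE (x + H) j))\<^sup>2) / real m"
        by (rule cs_avg[OF m(1)])
      have "(cmod (DD x H m))\<^sup>2 \<le> (3 * real H * dl)\<^sup>2"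
        using Db by (intro power_mono) auto
      also have "\<dots> = 9 * K^2 * real H ^ 4 / real N"
        unfolding dl_def using rN by (simp add: power_divide power_mult_distrib)
      finally have d: "(cmod (DD x H m))\<^sup>2 \<le> 9 * K^2 * real H ^ 4 / real N" .
      show ?thesis using a b1 b2 b3 d by simp
    qed
    finally show ?thesis .
  qed
  have "J3 N H \<le> (\<Sum>x\<in>X. 5 * (real q * (\<Sum>i<q. (cmod (FF (x + i * m + m) m))\<^sup>2)
     + (\<Sum>j<m. (cmod (EE (x + q * m + j) r))\<^sup>2) / real m
     + (\<Sum>j<m. (cmod (EE x j))\<^sup>2) / real m
     + (\<Sum>j<m. (cmod (EE (x + H) j))\<^sup>2) / real m
     + 9 * K^2 * real H ^ 4 / real N))"
    unfolding J3_eq X_def[symmetric] using pw by (rule sum_mono)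
  also have "\<dots> = 5 * (real q * (\<Sum>i<q. \<Sum>x\<in>X. (cmod (FF (x + (i * m + m)) m))\<^sup>2)
     + (\<Sum>j<m. \<Sum>x\<in>X. (cmod (EE (x + (q * m + j)) r))\<^sup>2) / real m
     + (\<Sum>j<m. \<Sum>x\<in>X. (cmod (EE x j))\<^sup>2) / real m
     + (\<Sum>j<m. \<Sum>x\<in>X. (cmod (EE (x + H) j))\<^sup>2) / real m
     + 9 * K^2 * real H ^ 4)"
    using rN cX
    by (simp add: sum.distrib sum_distrib_left[symmetric] sum_divide_distrib[symmetric]
        sum.swap[of _ X] add.assoc)
  also have "\<dots> \<le> 5 * (real q * (\<Sum>i<q. J3tilde N m + J3tilde (2*N) m)
     + (\<Sum>j<m. J3 N r + J3 (2*N) r) / real m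
     + (\<Sum>j<m. J3 N j + J3 (2*N) j) / real m
     + (\<Sum>j<m. J3 N j + J3 (2*N) j) / real m
     + 9 * K^2 * real H ^ 4)"
  proof -
    have t1: "(\<Sum>i<q. \<Sum>x\<in>X. (cmod (FF (x + (i * m + m)) m))\<^sup>2) \<le> (\<Sum>i<q. J3tilde N m + J3tilde (2*N) m)"
    proof (rule sum_mono)
      fix i assume i: "i \<in> {..<q}"
      have "Suc i \<le> q" using i by simp
      then have "Suc i * m \<le> q * m" by (rule mult_le_mono1)
      then have "i * m + m \<le> 2 * N" using qmH HN by simp
      then show "(\<Sum>x\<in>X. (cmod (FF (x + (i * m + m)) m))\<^sup>2) \<le> J3tilde N m + J3tilde (2*N) m"
        unfolding X_def by (rule shiftJt)
    qed
    have t2: "(\<Sum>j<m. \<Sum>x\<in>X. (cmod (EE (x + (q * m + j)) r))\<^sup>2) \<le> (\<Sum>j<m. J3 N r + J3 (2*N) r)"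
    proof (rule sum_mono)
      fix j assume j: "j \<in> {..<m}"
      have "q * m + j \<le> 2 * N" using j qmH HN m by simp
      then show "(\<Sum>x\<in>X. (cmod (EE (x + (q * m + j)) r))\<^sup>2) \<le> J3 N r + J3 (2*N) r"
        unfolding X_def by (rule shiftJ)
    qed
    have t3: "(\<Sum>j<m. \<Sum>x\<in>X. (cmod (EE x j))\<^sup>2) \<le> (\<Sum>j<m. J3 N j + J3 (2*N) j)"
    proof (rule sum_mono)
      fix j
      have "(\<Sum>x\<in>X. (cmod (EE x j))\<^sup>2) = J3 N j" unfolding J3_eq X_def ..
      then show "(\<Sum>x\<in>X. (cmod (EE x j))\<^sup>2) \<le> J3 N j + J3 (2*N) j"
        using J3_nonneg[of "2*N" j] by simp
    qed
    have t4: "(\<Sum>j<m. \<Sum>x\<in>X. (cmod (EE (x + H) j))\<^sup>2) \<le> (\<Sum>j<m. J3 N j + J3 (2*N) j)"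
      by (rule sum_mono) (use HN in \<open>auto simp: X_def intro: shiftJ\<close>)
    have q0: "real q \<ge> 0" by simp
    have mpos: "real m > 0" using m by simp
    show ?thesis
      using mult_left_mono[OF t1 q0] divide_right_mono[OF t2, of "real m"] divide_right_mono[OF t3, of "real m"]
        divide_right_mono[OF t4, of "real m"] mpos by simp
  qed
  also have "\<dots> = 5 * (real q ^ 2 * (J3tilde N m + J3tilde (2*N) m)
            + (J3 N r + J3 (2*N) r)
            + 2 / real m * (\<Sum>j<m. J3 N j + J3 (2*N) j)
            + 9 * K^2 * real H ^ 4)"
    using m by (simp add: power2_eq_square field_simps)
  finally show ?thesis unfolding q_def r_def .
qed




lemma cube_bound:
  fixes c :: real
  assumes "c > 0" "N \<ge> 1" "real H \<le> c * real N powr (1/3)"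
  shows "real H ^ 3 \<le> c ^ 3 * real N"
proof -
  have "real H ^ 3 \<le> (c * real N powr (1/3)) ^ 3" by (rule power_mono[OF assms(3)]) simp
  also have "\<dots> = c ^ 3 * (real N powr (1/3)) ^ 3" by (simp add: power_mult_distrib)
  also have "(real N powr (1/3)) ^ 3 = (real N powr (1/3)) powr (real 3)"
    using assms by (subst powr_realpow) auto
  also have "\<dots> = real N" using assms by (simp add: powr_powr)
  finally show ?thesis .
qed

lemma H_le_N:
  fixes c :: real
  assumes "c > 0" "N \<ge> 1" "real H \<le> c * real N powr (1/3)" "c ^ 3 \<le> real N"
  shows "H \<le> N"
proof -
  have "real H ^ 3 \<le> c ^ 3 * real N" by (rule cube_bound[OF assms(1-3)])
  also have "\<dots> \<le> real N * real N" using assms by (intro mult_right_mono) auto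
  also have "\<dots> \<le> real N ^ 3" using assms by (simp add: power3_eq_cube)
  finally have "real H ^ 3 \<le> real N ^ 3" .
  then have "real H ^ Suc 2 \<le> real N ^ Suc 2" by (simp add: numeral_3_eq_3)
  then have "real H \<le> real N" by (rule power_le_imp_le_base) auto
  then show ?thesis by simp
qed

lemma le_2N:
  fixes c :: real
  assumes "c > 0" "real H \<le> c * real N powr (1/3)"
  shows "real H \<le> c * real (2*N) powr (1/3)"
proof -
  have "real N powr (1/3) \<le> real (2*N) powr (1/3)" by (intro powr_mono2) auto
  then show ?thesis using assms by (meson mult_left_mono less_imp_le order_trans)
qed

lemma Npow_ge1: "N \<ge> 1 \<Longrightarrow> (e::real) > 0 \<Longrightarrow> real N powr e \<ge> 1"
  by (intro ge_one_powr_ge_zero) auto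

lemma powr_2N: "(e::real) > 0 \<Longrightarrow> real (2*N) powr e = 2 powr e * real N powr e"
  by (simp add: powr_mult)




locale setting =
  fixes c e B K :: real
  assumes c: "c > 0" and eps: "e > 0" and B: "B > 0" and K: "K \<ge> 0"
  and CLB: "\<And>N H. 0 < N \<Longrightarrow> 0 < H \<Longrightarrow> real H \<le> c * real N powr (1/3) \<Longrightarrow>
       J3tilde N H \<le> B * real N powr e * real N * real H"
  and reg: "\<And>N x y H. 1 \<le> N \<Longrightarrow> N < x \<Longrightarrow> x \<le> 2 * N \<Longrightarrow> H \<le> N \<Longrightarrow> x \<le> y \<Longrightarrow> y \<le> x + 2 * H
       \<Longrightarrow> cmod (rr y - rr x) \<le> K * real H / sqrt (real N)"
begin

definition Bd :: "real \<Rightarrow> bool" where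
  "Bd a \<longleftrightarrow> (\<exists>A>0. \<exists>N0. \<forall>N l. N \<ge> N0 \<longrightarrow> 1 \<le> l \<longrightarrow> real l \<le> c * real N powr (1/3) \<longrightarrow>
      J3 N l \<le> A * (real N powr e * real N) * real l powr a)"

definition N1 :: nat where "N1 = nat \<lceil>c ^ 3\<rceil> + 1"

lemma N1: "N \<ge> N1 \<Longrightarrow> N \<ge> 1 \<and> c ^ 3 \<le> real N"
  unfolding N1_def by (auto simp: le_nat_iff intro: order_trans[OF le_of_int_ceiling])

lemma JtB:
  assumes N: "N \<ge> 1" and m: "1 \<le> m" "real m \<le> c * real N powr (1/3)"
  shows "J3tilde N m + J3tilde (2*N) m \<le> B * (1 + 2 * 2 powr e) * (real N powr e * real N) * real m"
proof -
  have a: "J3tilde N m \<le> B * real N powr e * real N * real m" using CLB[of N m] N m by simp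
  have "J3tilde (2*N) m \<le> B * real (2*N) powr e * real (2*N) * real m"
    using CLB[of "2*N" m] N m le_2N[OF c m(2)] by simp
  also have "\<dots> = B * (2 * 2 powr e) * (real N powr e * real N) * real m"
    using powr_2N[OF eps, of N] by simp
  finally show ?thesis using a by (simp add: algebra_simps)
qed

lemma Hbig:
  assumes N: "N \<ge> 1" and H: "1 \<le> H" "real H \<le> c * real N powr (1/3)" and g: "1 \<le> g"
  shows "9 * K^2 * real H ^ 4 \<le> 9 * K^2 * c^3 * (real N powr e * real N) * real H powr g"
proof -
  have h3: "real H ^ 3 \<le> c ^ 3 * real N" by (rule cube_bound[OF c N H(2)])
  have "real H ^ 4 = real H * real H ^ 3" by (simp add: power_numeral_reduce)
  also have "\<dots> \<le> real H * (c ^ 3 * real N)" using h3 by (intro mult_left_mono) auto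
  also have "\<dots> \<le> real H powr g * (c ^ 3 * (real N powr e * real N))"
  proof (rule mult_mono)
    show "real H \<le> real H powr g"
      using powr_mono[OF g, of "real H"] H by simp
    have "real N \<le> real N powr e * real N" using mult_right_mono[OF Npow_ge1[OF N eps], of "real N"] by simp
    then show "c ^ 3 * real N \<le> c ^ 3 * (real N powr e * real N)" using c by (intro mult_left_mono) auto
  qed (use c in auto)
  finally have "real H ^ 4 \<le> c ^ 3 * (real N powr e * real N) * real H powr g" by (simp add: algebra_simps)
  then have "(9 * K^2) * real H ^ 4 \<le> (9 * K^2) * (c ^ 3 * (real N powr e * real N) * real H powr g)"
    by (intro mult_left_mono) auto
  then show ?thesis by (simp add: algebra_simps)
qed

lemma core_loc:
  assumes N: "N \<ge> N1" and H: "1 \<le> H" "real H \<le> c * real N powr (1/3)" and m: "1 \<le> m" "m \<le> H"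
  shows "J3 N H \<le> 5 * (real (H div m) ^ 2 * (J3tilde N m + J3tilde (2*N) m)
            + (J3 N (H mod m) + J3 (2*N) (H mod m))
            + 2 / real m * (\<Sum>j<m. J3 N j + J3 (2*N) j)
            + 9 * K^2 * real H ^ 4)"
proof -
  have N1': "N \<ge> 1" "c ^ 3 \<le> real N" using N1[OF N] by auto
  have HN: "H \<le> N" by (rule H_le_N[OF c N1'(1) H(2) N1'(2)])
  show ?thesis
    by (rule core[OF N1'(1) m HN K]) (rule reg, use N1' HN in auto)
qed

lemma base: "Bd 2"
proof -
  define A where "A = 5 * (B * (1 + 2 * 2 powr e) + 9 * K^2 * c^3)"
  have A: "A > 0" unfolding A_def using B K c by (intro mult_pos_pos add_pos_nonneg) auto
  have "J3 N H \<le> A * (real N powr e * real N) * real H powr 2"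
    if N: "N \<ge> N1" and H: "1 \<le> H" "real H \<le> c * real N powr (1/3)" for N H
  proof -
    have N1': "N \<ge> 1" using N1[OF N] by auto
    define P where "P = real N powr e * real N"
    have c1: "J3 N H \<le> 5 * (real H ^ 2 * (J3tilde N 1 + J3tilde (2*N) 1) + 9 * K^2 * real H ^ 4)"
      using core_loc[OF N H _ H(1)] by (simp add: J3_0)
    have one: "real (1::nat) \<le> c * real N powr (1/3)" using H by simp
    have t1: "J3tilde N 1 + J3tilde (2*N) 1 \<le> B * (1 + 2 * 2 powr e) * P"
      using JtB[OF N1' _ one] unfolding P_def by simp
    have t2: "9 * K^2 * real H ^ 4 \<le> 9 * K^2 * c^3 * P * real H ^ 2"
      using Hbig[OF N1' H, of 2] unfolding P_def by simp
    have "J3 N H \<le> 5 * (real H ^ 2 * (B * (1 + 2 * 2 powr e) * P) + 9 * K^2 * c^3 * P * real H ^ 2)"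
      using c1 t2 mult_left_mono[OF t1, of "real H ^ 2"] by simp
    also have "\<dots> = A * P * real H ^ 2" unfolding A_def by (simp add: algebra_simps)
    finally show ?thesis unfolding P_def using H by simp
  qed
  then show ?thesis unfolding Bd_def using A by blast
qed

lemma step:
  assumes IH: "Bd a" and a: "0 \<le> a" and b: "0 \<le> b" "b \<le> 1"
    and g: "2 - b \<le> g" "a * b \<le> g" "1 \<le> g"
  shows "Bd g"
proof -
  obtain A N0 where A: "A > 0" and IHb: "\<And>N l. N \<ge> N0 \<Longrightarrow> 1 \<le> l \<Longrightarrow> real l \<le> c * real N powr (1/3) \<Longrightarrow>
      J3 N l \<le> A * (real N powr e * real N) * real l powr a"
    using IH unfolding Bd_def by blast
  define B' where "B' = B * (1 + 2 * 2 powr e)"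
  define A' where "A' = A * (1 + 2 * 2 powr e)"
  define C where "C = 5 * (2 * B' + 3 * A' + 9 * K^2 * c^3)"
  have pe: "1 + 2 * 2 powr e > (0::real)" using powr_ge_zero[of 2 e] by linarith
  have B'0: "B' > 0" unfolding B'_def using B pe by simp
  have A'0: "A' > 0" unfolding A'_def using A pe by simp
  have C0: "C > 0" unfolding C_def using B'0 A'0 K c by (intro mult_pos_pos add_pos_nonneg) auto
  have "J3 N H \<le> C * (real N powr e * real N) * real H powr g"
    if N: "N \<ge> max N0 N1" and H: "1 \<le> H" "real H \<le> c * real N powr (1/3)" for N H
  proof -
    have NN1: "N \<ge> N1" "N \<ge> N0" using N by auto
    have N1': "N \<ge> 1" "c ^ 3 \<le> real N" using N1[OF NN1(1)] by auto
    have HN: "H \<le> N" by (rule H_le_N[OF c N1'(1) H(2) N1'(2)])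
    define P where "P = real N powr e * real N"
    have P0: "P \<ge> 0" unfolding P_def by simp
    have rH: "real H \<ge> 1" using H by simp
    define t where "t = real H powr b"
    have t1: "1 \<le> t" unfolding t_def using rH b by (intro ge_one_powr_ge_zero) auto
    have tH: "t \<le> real H" unfolding t_def using powr_mono[OF b(2) rH] rH by simp
    define m where "m = max 1 (nat \<lfloor>t\<rfloor>)"
    have m1: "1 \<le> m" unfolding m_def by simp
    have mt: "real m \<le> t" unfolding m_def using t1 by (auto simp: max_def)
    have mt2: "t / 2 \<le> real m"
    proof (cases "t \<ge> 2")
      case True
      then have "real (nat \<lfloor>t\<rfloor>) \<ge> t - 1" by linarith
      moreover have "real m \<ge> real (nat \<lfloor>t\<rfloor>)" unfolding m_def by simp
      ultimately show ?thesis using True by linarith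
    next
      case False then show ?thesis unfolding m_def by (auto simp: max_def)
    qed
    have mH: "m \<le> H" using mt tH by linarith
    have mpos: "real m > 0" using m1 by simp
    have mc: "real m \<le> c * real N powr (1/3)" using mH H by linarith
    have cl: "J3 N H \<le> 5 * (real (H div m) ^ 2 * (J3tilde N m + J3tilde (2*N) m)
            + (J3 N (H mod m) + J3 (2*N) (H mod m))
            + 2 / real m * (\<Sum>j<m. J3 N j + J3 (2*N) j)
            + 9 * K^2 * real H ^ 4)"
      by (rule core_loc[OF NN1(1) H m1 mH])
    have t_1: "real (H div m) ^ 2 * (J3tilde N m + J3tilde (2*N) m) \<le> 2 * B' * P * real H powr g"
    proof -
      have q: "real (H div m) \<le> real H / real m" by (rule of_nat_div_le_of_nat)
      have Jt: "J3tilde N m + J3tilde (2*N) m \<le> B' * P * real m"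
        using JtB[OF N1'(1) m1 mc] unfolding B'_def P_def .
      have "real (H div m) ^ 2 * (J3tilde N m + J3tilde (2*N) m) \<le> (real H / real m) ^ 2 * (B' * P * real m)"
        using q Jt by (intro mult_mono power_mono) (auto intro: add_nonneg_nonneg J3t_nonneg)
      also have "\<dots> = B' * P * (real H ^ 2 / real m)" using mpos by (simp add: power2_eq_square field_simps)
      finally have s1: "real (H div m) ^ 2 * (J3tilde N m + J3tilde (2*N) m) \<le> B' * P * (real H ^ 2 / real m)" .
      have s2: "real H ^ 2 / real m \<le> real H ^ 2 / (t / 2)"
        using mt2 t1 by (intro divide_left_mono) auto
      have s3: "real H ^ 2 / (t / 2) = 2 * real H powr (2 - b)"
      proof -
        have "real H powr (2 - b) = real H powr 2 / real H powr b" by (rule powr_diff)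
        also have "real H powr 2 = real H ^ 2" using rH by (simp add: powr_realpow')
        finally show ?thesis unfolding t_def by simp
      qed
      have s4: "real H powr (2 - b) \<le> real H powr g" using powr_mono[OF g(1) rH] .
      have "real H ^ 2 / real m \<le> 2 * real H powr g" using s2 s3 s4 by linarith
      then have "B' * P * (real H ^ 2 / real m) \<le> B' * P * (2 * real H powr g)"
        using B'0 P0 by (intro mult_left_mono) auto
      then show ?thesis using s1 by (simp add: algebra_simps)
    qed
    have sh: "J3 N l + J3 (2*N) l \<le> A' * P * real H powr g" if l: "l < m" for l
    proof (cases "l = 0")
      case True
      then show ?thesis using A'0 P0 by (simp add: J3_0)
    next
      case False
      then have l1: "1 \<le> l" by simp
      have lc: "real l \<le> c * real N powr (1/3)" using l mc by linarith
      have j1: "J3 N l \<le> A * P * real l powr a" using IHb[OF NN1(2) l1 lc] unfolding P_def .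
      have "J3 (2*N) l \<le> A * (real (2*N) powr e * real (2*N)) * real l powr a"
        using IHb[OF _ l1 le_2N[OF c lc]] NN1(2) by simp
      also have "real (2*N) powr e * real (2*N) = 2 * 2 powr e * P"
        unfolding P_def using powr_2N[OF eps, of N] by simp
      finally have j2: "J3 (2*N) l \<le> A * (2 * 2 powr e * P) * real l powr a" .
      have "J3 N l + J3 (2*N) l \<le> A' * P * real l powr a"
        using j1 j2 unfolding A'_def by (simp add: algebra_simps)
      also have "real l powr a \<le> real H powr g"
      proof -
        have "real l powr a \<le> t powr a" using l mt a by (intro powr_mono2) auto
        also have "t powr a = real H powr (b * a)" unfolding t_def by (simp add: powr_powr)
        also have "\<dots> \<le> real H powr g" using g(2) rH by (intro powr_mono) (auto simp: mult.commute)
        finally show ?thesis .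
      qed
      then have "A' * P * real l powr a \<le> A' * P * real H powr g" using A'0 P0 by (intro mult_left_mono) auto
      finally show ?thesis .
    qed
    have t_2: "J3 N (H mod m) + J3 (2*N) (H mod m) \<le> A' * P * real H powr g"
      using sh[of "H mod m"] m1 by simp
    have t_3: "2 / real m * (\<Sum>j<m. J3 N j + J3 (2*N) j) \<le> 2 * (A' * P * real H powr g)"
    proof -
      have "(\<Sum>j<m. J3 N j + J3 (2*N) j) \<le> (\<Sum>j<m. A' * P * real H powr g)"
        using sh by (intro sum_mono) auto
      also have "\<dots> = real m * (A' * P * real H powr g)" by simp
      finally have "2 / real m * (\<Sum>j<m. J3 N j + J3 (2*N) j) \<le> 2 / real m * (real m * (A' * P * real H powr g))"
        using mpos by (intro mult_left_mono) auto
      then show ?thesis using mpos by simp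
    qed
    have t_4: "9 * K^2 * real H ^ 4 \<le> 9 * K^2 * c^3 * P * real H powr g"
      using Hbig[OF N1'(1) H g(3)] unfolding P_def .
    have "J3 N H \<le> 5 * (2 * B' * P * real H powr g + A' * P * real H powr g
         + 2 * (A' * P * real H powr g) + 9 * K^2 * c^3 * P * real H powr g)"
    proof -
      have "real (H div m) ^ 2 * (J3tilde N m + J3tilde (2*N) m)
            + (J3 N (H mod m) + J3 (2*N) (H mod m))
            + 2 / real m * (\<Sum>j<m. J3 N j + J3 (2*N) j)
            + 9 * K^2 * real H ^ 4 \<le> 2 * B' * P * real H powr g + A' * P * real H powr g
         + 2 * (A' * P * real H powr g) + 9 * K^2 * c^3 * P * real H powr g"
        using t_1 t_2 t_3 t_4 by (intro add_mono)
      from order_trans[OF cl mult_left_mono[OF this]] show ?thesis by simp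
    qed
    also have "\<dots> = C * P * real H powr g" unfolding C_def by (simp add: algebra_simps)
    finally show ?thesis unfolding P_def .
  qed
  then show ?thesis unfolding Bd_def using C0 by blast
qed

end




theorem mainTheorem1:
  fixes c :: real
  assumes "c > 0"
  assumes CL: "\<forall>\<epsilon>>0. \<exists>C>0. \<forall>N H :: nat. 0 < N \<longrightarrow> 0 < H \<longrightarrow>
      real H \<le> c * real N powr (1/3) \<longrightarrow>
      J3tilde N H \<le> C * real N powr \<epsilon> * real N * real H"
  shows "\<forall>\<epsilon>>0. \<exists>C'>0. \<forall>N H :: nat. 0 < N \<longrightarrow> 0 < H \<longrightarrow>
      real H \<le> c * real N powr (1/3) \<longrightarrow>
      J3 N H \<le> C' * real N powr \<epsilon> * real N * real H powr (6/5)"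
proof (intro allI impI)
  fix e :: real assume e: "e > 0"
  obtain B where B: "B > 0" and CLB: "\<And>N H. 0 < N \<Longrightarrow> 0 < H \<Longrightarrow> real H \<le> c * real N powr (1/3) \<Longrightarrow>
       J3tilde N H \<le> B * real N powr e * real N * real H"
    using CL e by blast
  obtain K where K: "K \<ge> 0" and reg: "\<And>N x y H. 1 \<le> N \<Longrightarrow> N < x \<Longrightarrow> x \<le> 2 * N \<Longrightarrow> H \<le> N \<Longrightarrow>
       x \<le> y \<Longrightarrow> y \<le> x + 2 * H \<Longrightarrow> cmod (rr y - rr x) \<le> K * real H / sqrt (real N)"
    using rr_reg_nat by blast
  interpret S: setting c e B K
    by (unfold_locales) (use assms(1) e B K CLB reg in auto)
  have b2: "S.Bd 2" by (rule S.base)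
  have b43: "S.Bd (4/3)" by (rule S.step[OF b2, where b = "2/3"]) auto
  have b65: "S.Bd (6/5)" by (rule S.step[OF b43, where b = "4/5"]) auto
  obtain A N0 where A: "A > 0" and AB: "\<And>N l. N \<ge> N0 \<Longrightarrow> 1 \<le> l \<Longrightarrow> real l \<le> c * real N powr (1/3) \<Longrightarrow>
      J3 N l \<le> A * (real N powr e * real N) * real l powr (6/5)"
    using b65 unfolding S.Bd_def by blast
  define Hm where "Hm = nat \<lceil>c * real N0\<rceil>"
  define M where "M = (\<Sum>N'<N0. \<Sum>H'\<le>Hm. J3 N' H')"
  have M0: "M \<ge> 0" unfolding M_def by (intro sum_nonneg J3_nonneg)
  define C' where "C' = A + M + 1"
  have "J3 N H \<le> C' * real N powr e * real N * real H powr (6/5)"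
    if N: "0 < N" and H: "0 < H" "real H \<le> c * real N powr (1/3)" for N H
  proof -
    define P where "P = real N powr e * real N * real H powr (6/5)"
    have P1: "P \<ge> 1"
    proof -
      have "real N powr e \<ge> 1" using N e by (intro Npow_ge1) auto
      moreover have "real H powr (6/5) \<ge> 1" using H by (intro ge_one_powr_ge_zero) auto
      moreover have "real N \<ge> 1" using N by simp
      ultimately have "1 * 1 \<le> real N powr e * real N" by (intro mult_mono) auto
      then have "1 * 1 \<le> real N powr e * real N * real H powr (6/5)"
        using \<open>real H powr (6/5) \<ge> 1\<close> by (intro mult_mono) auto
      then show ?thesis unfolding P_def by simp
    qed
    show ?thesis
    proof (cases "N \<ge> N0")
      case True
      have "J3 N H \<le> A * P" using AB[OF True _ H(2)] H unfolding P_def by (simp add: mult.assoc)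
      also have "\<dots> \<le> C' * P" unfolding C'_def using M0 P1 by (intro mult_right_mono) auto
      finally show ?thesis unfolding P_def by (simp add: mult.assoc)
    next
      case False
      have "real N powr (1/3) \<le> real N powr 1" using N by (intro powr_mono) auto
      then have "real N powr (1/3) \<le> real N" by (simp add: powr_one)
      then have "c * real N powr (1/3) \<le> c * real N" using assms(1) by (intro mult_left_mono) auto
      then have "real H \<le> c * real N" using H by linarith
      also have "\<dots> \<le> c * real N0" using False assms(1) by simp
      finally have "H \<le> Hm" unfolding Hm_def by linarith
      then have "J3 N H \<le> (\<Sum>H'\<le>Hm. J3 N H')"
        by (intro member_le_sum) (auto intro: J3_nonneg)
      also have "\<dots> \<le> M" unfolding M_def using False
        by (intro member_le_sum[where f = "\<lambda>N'. \<Sum>H'\<le>Hm. J3 N' H'"]) (auto intro: sum_nonneg J3_nonneg)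
      also have "\<dots> \<le> C'" unfolding C'_def using A by simp
      also have "\<dots> \<le> C' * P" using P1 A M0 unfolding C'_def by simp
      finally show ?thesis unfolding P_def by (simp add: mult.assoc)
    qed
  qed
  moreover have "C' > 0" unfolding C'_def using A M0 by simp
  ultimately show "\<exists>C'>0. \<forall>N H :: nat. 0 < N \<longrightarrow> 0 < H \<longrightarrow>
      real H \<le> c * real N powr (1/3) \<longrightarrow>
      J3 N H \<le> C' * real N powr e * real N * real H powr (6/5)" by blast
qed



end
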